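(* Let $\mathtt{W}_1,\mathtt{W}_2,\mathtt{W}\in\mathcal{U}^{\ast,\circ}$. (i) If $\mathtt{W}_1=\mathbf{1}$, then $m_{\mathtt{W}_1,\mathtt{W}_2;\mathtt{W}}=\delta_{\mathtt{W}=\mathtt{W}_2}$. (ii) If $\mathtt{W}_2=\mathbf{1}$, then $m_{\mathtt{W}_1,\mathtt{W}_2;\mathtt{W}}=\delta_{\mathtt{W}=\mathtt{W}_1}$. (iii) If $\mathtt{W}=\mathbf{1}$, then $m_{\mathtt{W}_1,\mathtt{W}_2;\mathtt{W}}=\delta_{\mathtt{W}_1=\mathtt{W}_2=\mathbf{1}}$. (iv) If $\mathtt{W}_1,\mathtt{W}_2,\mathtt{W}\neq\mathbf{1}$, write $\mathtt{W}_1=\mathtt{W}_1'u_{j_1}u_0^{n_1}$, $\mathtt{W}_2=\mathtt{W}_2'u_{j_2}u_0^{n_2}$, $\mathtt{W}=\mathtt{W}'u_{j_3}u_0^{n_3}$ with uniquely determined $\mathtt{W}_1',\mathtt{W}_2',\mathtt{W}'\in\mathcal{U}^{\ast,\circ}$, $j_1,j_2,j_3\in\mathbb{Z}_{>0}$, $n_1,n_2,n_3\in\mathbb{Z}_{\ge0}$. Then \begin{align*} m_{\mathtt{W}_1,\mathtt{W}_2;\mathtt{W}} =& \sum_{\substack{0\le k\le j\le n_2\\ 0\le\varepsilon\le\min\{1,n_2-j\}}}\binom{n_1+k}{n_1}\binom{n_1}{j-k}\, m_{\mathtt{W}_1',\mathtt{W}_2'u_{j_2}u_0^{n_2-j-\varepsilon};\mathtt{W}'}\,\delta_{j_1=j_3}\,\delta_{n_1+k=n_3}\\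 &+\sum_{\substack{0\le k\le j\le n_1\\ 0\le\varepsilon\le\min\{1,n_1-j\}}}\binom{n_2+k}{n_2}\binom{n_2}{j-k}\, m_{\mathtt{W}_1'u_{j_1}u_0^{n_1-j-\varepsilon},\mathtt{W}_2';\mathtt{W}'}\,\delta_{j_2=j_3}\,\delta_{n_2+k=n_3}\\ &+\sum_{k=0}^{n_2}\binom{n_1+k}{n_1}\binom{n_1}{n_2-k}\, m_{\mathtt{W}_1',\mathtt{W}_2';\mathtt{W}'}\,\delta_{j_1+j_2=j_3}\,\delta_{n_1+k=n_3}. \end{align*}
   Context: Let $\mathcal{U}=\{u_j\mid j\in\mathbb{Z}_{\geq0}\}$ be an alphabet; $\mathcal{U}^\ast$ is the set of words (finite concatenations of letters, including the empty word $\mathbf{1}$), and $\mathbb{Q}\langle\mathcal{U}\rangle$ is the $\mathbb{Q}$-vector space with basis $\mathcal{U}^\ast$; $u_0^n$ denotes $n$ copies of $u_0$. The stuffle product $\ast$ on $\mathbb{Q}\langle\mathcal{U}\rangle$ is the $\mathbb{Q}$-bilinear product with $\mathbf{1}\ast\mathtt{W}=\mathtt{W}\ast\mathbf{1}=\mathtt{W}$ and $u_{j_1}\mathtt{W}_1\ast u_{j_2}\mathtt{W}_2 = u_{j_1}(\mathtt{W}_1\ast u_{j_2}\mathtt{W}_2)+u_{j_2}(u_{j_1}\mathtt{W}_1\ast\mathtt{W}_2)+u_{j_1+j_2}(\mathtt{W}_1\ast\mathtt{W}_2)$ for $j_1,j_2\in\mathbb{Z}_{\ge0}$ and words $\mathtt{W}_1,\mathtt{W}_2$.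 $\mathcal{U}^{\ast,\circ}$ is the set of words not starting with $u_0$ (including $\mathbf{1}$); its span is closed under $\ast$. For $\mathtt{W}_1,\mathtt{W}_2\in\mathcal{U}^{\ast,\circ}$, $m_{\mathtt{W}_1,\mathtt{W}_2;\mathtt{W}}\in\mathbb{Z}_{\ge0}$ is defined by $\mathtt{W}_1\ast\mathtt{W}_2=\sum_{\mathtt{W}\in\mathcal{U}^{\ast,\circ}}m_{\mathtt{W}_1,\mathtt{W}_2;\mathtt{W}}\mathtt{W}$. $\delta_{\bullet}$ is $1$ if the condition $\bullet$ holds and $0$ otherwise. Binomial coefficients $\binom{a}{b}$ with $b<0$ or $b>a$ are $0$. *)

theory Defs
  imports Main "HOL-Library.Multiset"
begin

text \<open>Words over the alphabet U = {u_j | j >= 0} are lists of naturals; the letter u_j is j.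
  The stuffle product of two words is a Z_{>=0}-linear combination of words, represented
  as a multiset of words (coefficient = multiplicity).\<close>

fun stuffle :: "nat list \<Rightarrow> nat list \<Rightarrow> nat list multiset" where
  "stuffle [] w = {#w#}"
| "stuffle (a # w1) [] = {#a # w1#}"
| "stuffle (a # w1) (b # w2) =
     image_mset ((#) a) (stuffle w1 (b # w2))
   + image_mset ((#) b) (stuffle (a # w1) w2)
   + image_mset ((#) (a + b)) (stuffle w1 w2)"

definition Ucirc :: "nat list set" where
  "Ucirc = {w. w = [] \<or> hd w \<noteq> 0}"

definition mcoef :: "nat list \<Rightarrow> nat list \<Rightarrow> nat list \<Rightarrow> nat" where
  "mcoef W1 W2 W = count (stuffle W1 W2) W"

end

theory Submission imports Defs begin

lemma stuffle_Nil2[simp]: "stuffle w [] = {#w#}" by (cases w) auto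

lemma R: "stuffle (X@[x]) (Y@[y]) = image_mset (\<lambda>w. w@[x]) (stuffle X (Y@[y]))
  + image_mset (\<lambda>w. w@[y]) (stuffle (X@[x]) Y) + image_mset (\<lambda>w. w@[x+y]) (stuffle X Y)"
proof (induction X Y rule: stuffle.induct)
  case (1 w)
  then show ?case
    by (induction w) (auto simp: image_mset.compositionality o_def add_ac)
next
  case (2 a w1)
  then show ?case
    by (induction w1 arbitrary: a) (auto simp: image_mset.compositionality o_def add_ac)
next
  case (3 a w1 b w2)
  then show ?case
    by (simp add: image_mset.compositionality o_def add_ac)
qed

lemma cnt_snoc: "count (image_mset (\<lambda>w. w@[x]) M) (V@[z]) = (if z = x then count M V else 0)"
proof (cases "z = x")
  case True
  have "{w. w \<in># M \<and> V @ [z] = w @ [x]} = (if V \<in># M then {V} else {})" using True by auto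
  then show ?thesis using True by (auto simp: count_image_mset' count_eq_zero_iff)
next
  case False
  then show ?thesis by (auto simp: count_image_mset' intro!: sum.neutral)
qed

lemma cnt_snoc0: "count (image_mset (\<lambda>w. w@[x]) M) (V@[z]) = (if z = x then count M V else 0)"
  by (rule cnt_snoc)

lemma Nil_mem: "[] \<in># stuffle X Y \<longleftrightarrow> X = [] \<and> Y = []"
  by (induction X Y rule: stuffle.induct) auto

lemma Nil_count: "count (stuffle X Y) [] = (if X = [] \<and> Y = [] then 1 else 0)"
proof (cases "X = [] \<and> Y = []")
  case True then show ?thesis by simp
next
  case False then show ?thesis using Nil_mem[of X Y] by (auto simp: count_eq_zero_iff)
qed

lemma rep_snoc: "replicate (Suc a) x = replicate a x @ [x]"
  by (simp add: replicate_append_same)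

definition N :: "nat \<Rightarrow> nat \<Rightarrow> nat \<Rightarrow> nat" where
  "N x y n = count (stuffle (replicate x 0) (replicate y 0)) (replicate n 0)"

lemma N0: "N x y 0 = (if x = 0 \<and> y = 0 then 1 else 0)"
  by (simp add: N_def Nil_count)

lemma Nrec: assumes "n > 0"
  shows "N x y n = (if x > 0 then N (x-1) y (n-1) else 0) + (if y > 0 then N x (y-1) (n-1) else 0)
     + (if x > 0 \<and> y > 0 then N (x-1) (y-1) (n-1) else 0)"
proof -
  obtain n' where n: "n = Suc n'" using assms by (cases n) auto
  show ?thesis
  proof (cases x)
    case 0
    then show ?thesis
    proof (cases y)
      case 0 then show ?thesis using \<open>x = 0\<close> n by (simp add: N_def)
    next
      case (Suc y') then show ?thesis using \<open>x = 0\<close> n by (simp add: N_def)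
    qed
  next
    case (Suc x')
    then show ?thesis
    proof (cases y)
      case 0 then show ?thesis using \<open>x = Suc x'\<close> n by (simp add: N_def)
    next
      case (Suc y') then show ?thesis using \<open>x = Suc x'\<close> n
        by (simp only: N_def rep_snoc R count_union cnt_snoc) simp
    qed
  qed
qed

lemma sh: "(if (b::nat)>0 then (\<Sum>r\<le>b-1. h r) else 0) = (\<Sum>r\<le>b. if r<b then h r else (0::nat))"
proof (cases b)
  case 0 then show ?thesis by simp
next
  case (Suc b')
  have "(\<Sum>r\<le>b. if r<b then h r else (0::nat)) = (\<Sum>r\<le>b'. if r<b then h r else 0)"
    using Suc by (simp add: sum.atMost_Suc)
  also have "\<dots> = (\<Sum>r\<le>b'. h r)" using Suc by (intro sum.cong) auto
  finally show ?thesis using Suc by simp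
qed

lemma S1rec: assumes "n>0"
  shows "(\<Sum>r\<le>b. N a (b-r) n * g r) = (if a>0 then \<Sum>r\<le>b. N (a-1) (b-r) (n-1) * g r else 0)
    + (if b>0 then \<Sum>r\<le>b-1. N a (b-1-r) (n-1) * g r else 0)
    + (if a>0 \<and> b>0 then \<Sum>r\<le>b-1. N (a-1) (b-1-r) (n-1) * g r else 0)"
proof -
  have pw: "N a (b-r) n * g r = (if a>0 then N (a-1) (b-r) (n-1) * g r else 0)
     + (if r<b then N a (b-1-r) (n-1) * g r else 0)
     + (if r<b then (if a>0 then N (a-1) (b-1-r) (n-1) * g r else 0) else 0)" if "r \<le> b" for r
    using Nrec[OF assms, of a "b-r"] that by (auto simp: algebra_simps diff_diff_add add.commute)
  have "(\<Sum>r\<le>b. N a (b-r) n * g r) = (\<Sum>r\<le>b. (if a>0 then N (a-1) (b-r) (n-1) * g r else 0)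
     + (if r<b then N a (b-1-r) (n-1) * g r else 0)
     + (if r<b then (if a>0 then N (a-1) (b-1-r) (n-1) * g r else 0) else 0))"
    using pw by (intro sum.cong) auto
  also have "\<dots> = (\<Sum>r\<le>b. (if a>0 then N (a-1) (b-r) (n-1) * g r else 0))
     + (\<Sum>r\<le>b. if r<b then N a (b-1-r) (n-1) * g r else 0)
     + (\<Sum>r\<le>b. if r<b then (if a>0 then N (a-1) (b-1-r) (n-1) * g r else 0) else 0)"
    by (simp add: sum.distrib)
  also have "\<dots> = (if a>0 then \<Sum>r\<le>b. N (a-1) (b-r) (n-1) * g r else 0)
    + (if b>0 then \<Sum>r\<le>b-1. N a (b-1-r) (n-1) * g r else 0)
    + (if b>0 then \<Sum>r\<le>b-1. (if a>0 then N (a-1) (b-1-r) (n-1) * g r else 0) else 0)"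
    by (simp only: sh) simp
  also have "\<dots> = (if a>0 then \<Sum>r\<le>b. N (a-1) (b-r) (n-1) * g r else 0)
    + (if b>0 then \<Sum>r\<le>b-1. N a (b-1-r) (n-1) * g r else 0)
    + (if a>0 \<and> b>0 then \<Sum>r\<le>b-1. N (a-1) (b-1-r) (n-1) * g r else 0)"
    by simp
  finally show ?thesis .
qed

lemma S2rec: assumes "n>0"
  shows "(\<Sum>s\<le>a. N (a-s) b n * g s) = (if a>0 then \<Sum>s\<le>a-1. N (a-1-s) b (n-1) * g s else 0)
    + (if b>0 then \<Sum>s\<le>a. N (a-s) (b-1) (n-1) * g s else 0)
    + (if a>0 \<and> b>0 then \<Sum>s\<le>a-1. N (a-1-s) (b-1) (n-1) * g s else 0)"
proof -
  have pw: "N (a-s) b n * g s = (if s<a then N (a-1-s) b (n-1) * g s else 0)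
     + (if b>0 then N (a-s) (b-1) (n-1) * g s else 0)
     + (if s<a then (if b>0 then N (a-1-s) (b-1) (n-1) * g s else 0) else 0)" if "s \<le> a" for s
    using Nrec[OF assms, of "a-s" b] that by (auto simp: algebra_simps diff_diff_add add.commute)
  have "(\<Sum>s\<le>a. N (a-s) b n * g s) = (\<Sum>s\<le>a. (if s<a then N (a-1-s) b (n-1) * g s else 0)
     + (if b>0 then N (a-s) (b-1) (n-1) * g s else 0)
     + (if s<a then (if b>0 then N (a-1-s) (b-1) (n-1) * g s else 0) else 0))"
    using pw by (intro sum.cong) auto
  also have "\<dots> = (\<Sum>s\<le>a. if s<a then N (a-1-s) b (n-1) * g s else 0)
     + (\<Sum>s\<le>a. (if b>0 then N (a-s) (b-1) (n-1) * g s else 0))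
     + (\<Sum>s\<le>a. if s<a then (if b>0 then N (a-1-s) (b-1) (n-1) * g s else 0) else 0)"
    by (simp add: sum.distrib)
  also have "\<dots> = (if a>0 then \<Sum>s\<le>a-1. N (a-1-s) b (n-1) * g s else 0)
    + (if b>0 then \<Sum>s\<le>a. N (a-s) (b-1) (n-1) * g s else 0)
    + (if a>0 then \<Sum>s\<le>a-1. (if b>0 then N (a-1-s) (b-1) (n-1) * g s else 0) else 0)"
    by (simp only: sh) simp
  also have "\<dots> = (if a>0 then \<Sum>s\<le>a-1. N (a-1-s) b (n-1) * g s else 0)
    + (if b>0 then \<Sum>s\<le>a. N (a-s) (b-1) (n-1) * g s else 0)
    + (if a>0 \<and> b>0 then \<Sum>s\<le>a-1. N (a-1-s) (b-1) (n-1) * g s else 0)"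
    by simp
  finally show ?thesis .
qed

lemma sum_last: "(\<Sum>r\<le>(b::nat). (if b - r = 0 then 1 else 0) * g r) = (g b::nat)"
proof -
  have "(\<Sum>r\<le>b. (if b - r = 0 then 1 else 0) * g r) = (\<Sum>r\<le>b. if r = b then g r else 0)"
    by (intro sum.cong) auto
  then show ?thesis by (simp only: sum.delta) simp
qed

context
  fixes A B W' :: "nat list" and j1 j2 j3 :: nat
  assumes p1: "j1 > 0" and p2: "j2 > 0" and p3: "j3 > 0"
begin

definition T where "T a b n = count (stuffle (A@[j1]@replicate a 0) (B@[j2]@replicate b 0)) (W'@[j3]@replicate n 0)"
definition g1 where "g1 r = mcoef A (B@[j2]@replicate r 0) W' + (if r>0 then mcoef A (B@[j2]@replicate (r-1) 0) W' else 0)"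
definition g2 where "g2 s = mcoef (A@[j1]@replicate s 0) B W' + (if s>0 then mcoef (A@[j1]@replicate (s-1) 0) B W' else 0)"
definition F where "F a b n = (if j1=j3 then \<Sum>r\<le>b. N a (b-r) n * g1 r else 0)
   + (if j2=j3 then \<Sum>s\<le>a. N (a-s) b n * g2 s else 0)
   + (if j1+j2=j3 then N a b n * mcoef A B W' else 0)"

lemma Frec: assumes "n > 0"
  shows "F a b n = (if a>0 then F (a-1) b (n-1) else 0) + (if b>0 then F a (b-1) (n-1) else 0)
     + (if a>0 \<and> b>0 then F (a-1) (b-1) (n-1) else 0)"
  unfolding F_def S1rec[OF assms] S2rec[OF assms] Nrec[OF assms, of a b]
  by (auto simp: algebra_simps)

lemma snoc_eq: "xs @ [j] @ replicate (Suc a) 0 = (xs @ [j] @ replicate a 0) @ [0]"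
  by (simp add: replicate_append_same)

lemma T0: "T a b 0 = F a b 0"
proof (cases a)
  case 0
  then show ?thesis
  proof (cases b)
    case 0
    then show ?thesis using \<open>a = 0\<close>
      using R[of A j1 B j2]
      by (simp add: T_def F_def N0 g1_def g2_def mcoef_def cnt_snoc)
  next
    case (Suc b')
    have "T a b 0 = count (stuffle (A@[j1]) ((B@[j2]@replicate b' 0)@[0])) (W'@[j3])"
      using \<open>a = 0\<close> Suc by (simp add: T_def snoc_eq[of "B" j2 b', simplified])
    also have "\<dots> = (if j1 = j3 then g1 b else 0)"
      using Suc by (simp only: R count_union cnt_snoc) (use p3 in \<open>auto simp: g1_def mcoef_def replicate_append_same\<close>)
    finally show ?thesis using \<open>a = 0\<close> Suc by (simp add: F_def N0 sum_last)
  qed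
next
  case (Suc a')
  then show ?thesis
  proof (cases b)
    case 0
    have "T a b 0 = count (stuffle ((A@[j1]@replicate a' 0)@[0]) (B@[j2])) (W'@[j3])"
      using \<open>b = 0\<close> Suc by (simp add: T_def snoc_eq[of "A" j1 a', simplified])
    also have "\<dots> = (if j2 = j3 then g2 a else 0)"
      using Suc by (simp only: R count_union cnt_snoc) (use p3 in \<open>auto simp: g2_def mcoef_def replicate_append_same\<close>)
    finally show ?thesis using \<open>b = 0\<close> Suc by (simp add: F_def N0 sum_last)
  next
    case (Suc b')
    have "T a b 0 = count (stuffle ((A@[j1]@replicate a' 0)@[0]) ((B@[j2]@replicate b' 0)@[0])) (W'@[j3])"
      using \<open>a = Suc a'\<close> Suc by (simp add: T_def snoc_eq[of "A" j1 a', simplified] snoc_eq[of "B" j2 b', simplified])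
    also have "\<dots> = 0"
      using p3 by (simp only: R count_union cnt_snoc) simp
    finally show ?thesis using \<open>a = Suc a'\<close> Suc by (simp add: F_def N0)
  qed
qed

lemma TF: "T a b n = F a b n"
proof (induction n arbitrary: a b)
  case 0
  then show ?case by (rule T0)
next
  case (Suc n)
  have W: "W' @ [j3] @ replicate (Suc n) 0 = (W' @ [j3] @ replicate n 0) @ [0]" by (rule snoc_eq)
  have "T a b (Suc n) = (if a>0 then T (a-1) b n else 0) + (if b>0 then T a (b-1) n else 0)
     + (if a>0 \<and> b>0 then T (a-1) (b-1) n else 0)"
  proof (cases a)
    case 0
    then show ?thesis
    proof (cases b)
      case 0
      then show ?thesis using \<open>a = 0\<close> p1 p2
        unfolding T_def by (simp only: \<open>a = 0\<close> \<open>b = 0\<close> snoc_eq R count_union cnt_snoc append_Nil2 replicate_0) simp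
    next
      case (Suc b')
      then show ?thesis using \<open>a = 0\<close> p1
        unfolding T_def by (simp only: \<open>a = 0\<close> \<open>b = Suc b'\<close> snoc_eq R count_union cnt_snoc append_Nil2 replicate_0) (simp add: replicate_append_same)
    qed
  next
    case (Suc a')
    then show ?thesis
    proof (cases b)
      case 0
      then show ?thesis using \<open>a = Suc a'\<close> p2
        unfolding T_def by (simp only: \<open>a = Suc a'\<close> \<open>b = 0\<close> snoc_eq R count_union cnt_snoc append_Nil2 replicate_0) (simp add: replicate_append_same)
    next
      case (Suc b')
      then show ?thesis using \<open>a = Suc a'\<close>
        unfolding T_def by (simp only: \<open>a = Suc a'\<close> \<open>b = Suc b'\<close> snoc_eq R count_union cnt_snoc) (simp add: replicate_append_same)
    qed
  qed
  then show ?case using Suc.IH Frec[of "Suc n" a b] by simp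
qed

end

lemma Nclosed: "N x y n = (if n \<le> x+y then (n choose x) * (x choose (x+y-n)) else 0)"
proof (induction n arbitrary: x y)
  case 0
  show ?case by (cases x) (auto simp: N0)
next
  case (Suc n)
  have r: "N x y (Suc n) = (if x > 0 then N (x-1) y n else 0) + (if y > 0 then N x (y-1) n else 0)
     + (if x > 0 \<and> y > 0 then N (x-1) (y-1) n else 0)" using Nrec[of "Suc n" x y] by simp
  consider (a) "x=0" "y=0" | (b) q where "x=0" "y=Suc q" | (c) p where "x=Suc p" "y=0"
     | (d) p q where "x=Suc p" "y = Suc q" by (cases x; cases y) auto
  then show ?case
  proof cases
    case a then show ?thesis using r by (simp add: N0)
  next
    case (b q) then show ?thesis using r Suc.IH by auto
  next
    case (c p) then show ?thesis using r Suc.IH by (auto simp: binomial_eq_0)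
  next
    case (d p q)
    have e: "N x y (Suc n) = N p (Suc q) n + N (Suc p) q n + N p q n" using r d by simp
    consider (lt) "n \<le> p + q" | (eq) "n = p + q + 1" | (gt) "n > p + q + 1" by linarith
    then show ?thesis
    proof cases
      case lt
      then obtain dd where dd: "p + q = n + dd" using le_Suc_ex by blast
      have 1: "N p (Suc q) n = (n choose p) * (p choose Suc dd)"
        using Suc.IH[of p "Suc q"] dd by simp
      have 2: "N (Suc p) q n = (n choose Suc p) * (Suc p choose Suc dd)"
        using Suc.IH[of "Suc p" q] dd by simp
      have 3: "N p q n = (n choose p) * (p choose dd)"
        using Suc.IH[of p q] dd by simp
      have 4: "(if Suc n \<le> x + y then (Suc n choose x) * (x choose (x + y - Suc n)) else 0)
          = (Suc n choose Suc p) * (Suc p choose Suc dd)" using d dd by simp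
      have 5: "(Suc n choose Suc p) * (Suc p choose Suc dd) = (n choose p) * (p choose Suc dd)
           + (n choose Suc p) * (Suc p choose Suc dd) + (n choose p) * (p choose dd)"
        by (simp only: binomial_Suc_Suc[of n p] binomial_Suc_Suc[of p dd] distrib_left distrib_right)
      show ?thesis using e 1 2 3 4 5 by simp
    next
      case eq
      have 1: "N p (Suc q) n = (n choose p)" using Suc.IH[of p "Suc q"] eq by simp
      have 2: "N (Suc p) q n = (n choose Suc p)" using Suc.IH[of "Suc p" q] eq by simp
      have 3: "N p q n = 0" using Suc.IH[of p q] eq by simp
      have 4: "(if Suc n \<le> x + y then (Suc n choose x) * (x choose (x + y - Suc n)) else 0)
          = (Suc n choose Suc p)" using d eq by simp
      show ?thesis using e 1 2 3 4 binomial_Suc_Suc[of n p] by simp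
    next
      case gt
      have 1: "N p (Suc q) n = 0" using Suc.IH[of p "Suc q"] gt by simp
      have 2: "N (Suc p) q n = 0" using Suc.IH[of "Suc p" q] gt by simp
      have 3: "N p q n = 0" using Suc.IH[of p q] gt by simp
      show ?thesis using e 1 2 3 d gt by simp
    qed
  qed
qed

lemma refl_sum: "(\<Sum>r\<le>(n::nat). f (n-r)) = (\<Sum>l\<le>n. (f l :: nat))"
  by (rule sum.reindex_bij_witness[where i="\<lambda>i. n-i" and j="\<lambda>i. n-i"]) auto

lemma conv0:
  fixes h :: "nat \<Rightarrow> nat"
  shows "(\<Sum>(k, j, e) \<in> {(k, j, e). k \<le> j \<and> j \<le> n2 \<and> e \<le> min 1 (n2 - j)}.
      ((n1 + k) choose n1) * (n1 choose (j - k)) * h (n2 - j - e) * of_bool P * of_bool (n1 + k = n3))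
    = (if P then \<Sum>r\<le>n2. N n1 (n2-r) n3 * (h r + (if r>0 then h (r-1) else 0)) else 0)"
proof -
  define G where "G j = h (n2-j) + (if j < n2 then h (n2-j-1) else 0)" for j
  have set: "{(k, j, e). k \<le> j \<and> j \<le> n2 \<and> e \<le> min 1 (n2 - j)} = (SIGMA k:{..n2}. SIGMA j:{k..n2}. {..min 1 (n2-j)})"
    by auto
  have inner: "(\<Sum>e\<le>min 1 (n2-j). c * h (n2-j-e)) = c * G j" for c j
  proof (cases "j < n2")
    case True
    then have "min 1 (n2-j) = Suc 0" by simp
    then show ?thesis using True by (simp add: G_def algebra_simps)
  next
    case False
    then show ?thesis by (simp add: G_def)
  qed
  have "(\<Sum>(k, j, e) \<in> {(k, j, e). k \<le> j \<and> j \<le> n2 \<and> e \<le> min 1 (n2 - j)}.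
      ((n1 + k) choose n1) * (n1 choose (j - k)) * h (n2 - j - e) * of_bool P * of_bool (n1 + k = n3))
     = (\<Sum>k\<le>n2. \<Sum>j\<in>{k..n2}. \<Sum>e\<le>min 1 (n2-j).
      (((n1 + k) choose n1) * (n1 choose (j - k)) * of_bool P * of_bool (n1 + k = n3)) * h (n2 - j - e))"
    unfolding set by (simp add: sum.Sigma[symmetric] algebra_simps)
  also have "\<dots> = (\<Sum>k\<le>n2. \<Sum>j\<in>{k..n2}.
      (((n1 + k) choose n1) * (n1 choose (j - k)) * of_bool P * of_bool (n1 + k = n3)) * G j)"
    by (simp only: inner)
  also have "\<dots> = (\<Sum>k\<le>n2. if k = n3 - n1 \<and> n1 \<le> n3 then (\<Sum>j\<in>{k..n2}.
      (((n1 + k) choose n1) * (n1 choose (j - k)) * of_bool P) * G j) else 0)"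
    by (intro sum.cong) auto
  also have "\<dots> = (if n1 \<le> n3 \<and> n3 - n1 \<le> n2 then (\<Sum>j\<in>{n3-n1..n2}.
      ((n3 choose n1) * (n1 choose (j - (n3-n1))) * of_bool P) * G j) else 0)"
    by (simp add: sum.delta[where a="n3-n1"] cong: if_cong)
  also have "\<dots> = (if P then \<Sum>l\<le>n2. N n1 l n3 * G l else 0)"
  proof (cases "P \<and> n1 \<le> n3 \<and> n3 - n1 \<le> n2")
    case True
    have "(\<Sum>l\<le>n2. N n1 l n3 * G l) = (\<Sum>l\<in>{n3-n1..n2}. N n1 l n3 * G l)"
      by (rule sum.mono_neutral_right) (auto simp: Nclosed)
    also have "\<dots> = (\<Sum>j\<in>{n3-n1..n2}. ((n3 choose n1) * (n1 choose (j - (n3-n1))) * of_bool P) * G j)"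
      using True by (intro sum.cong) (auto simp: Nclosed add.commute)
    finally show ?thesis using True by simp
  next
    case False
    moreover have "P \<Longrightarrow> (\<Sum>l\<le>n2. N n1 l n3 * G l) = 0" if "\<not> (n1 \<le> n3 \<and> n3 - n1 \<le> n2)"
      using that by (intro sum.neutral) (auto simp: Nclosed)
    ultimately show ?thesis by auto
  qed
  also have "\<dots> = (if P then \<Sum>r\<le>n2. N n1 (n2-r) n3 * (h r + (if r>0 then h (r-1) else 0)) else 0)"
  proof -
    have "(\<Sum>r\<le>n2. N n1 (n2-r) n3 * (h r + (if r>0 then h (r-1) else 0)))
        = (\<Sum>r\<le>n2. N n1 (n2-r) n3 * G (n2 - r))"
      by (intro sum.cong) (auto simp: G_def)
    also have "\<dots> = (\<Sum>l\<le>n2. N n1 l n3 * G l)"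
      by (rule refl_sum[where f="\<lambda>l. N n1 l n3 * G l"])
    finally show ?thesis by simp
  qed
  finally show ?thesis .
qed

lemma stuffle_comm: "stuffle X Y = stuffle Y X"
  by (induction X Y rule: stuffle.induct) (auto simp: add_ac)

lemma N_sym: "N x y n = N y x n"
  by (simp add: N_def stuffle_comm)


lemma conv:
  fixes h :: "nat \<Rightarrow> nat"
  shows "(\<Sum>(k, j, e) \<in> {(k, j, e). k \<le> j \<and> j \<le> q \<and> e \<le> min 1 (q - j)}.
      ((p + k) choose p) * (p choose (j - k)) * h (q - j - e) * of_bool P * of_bool (p + k = t))
    = (if P then \<Sum>r\<le>q. N p (q-r) t * (h r + (if r>0 then h (r-1) else 0)) else 0)"
  by (rule conv0)

lemma conv3: "(\<Sum>k = 0..q. ((p + k) choose p) * (p choose (q - k)) * M * of_bool P * of_bool (p + k = t))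
   = (if P then N p q t * M else (0::nat))"
proof -
  have "(\<Sum>k = 0..q. ((p + k) choose p) * (p choose (q - k)) * M * of_bool P * of_bool (p + k = t))
     = (\<Sum>k = 0..q. if k = t - p then (if p \<le> t \<and> P then (t choose p) * (p choose (q - k)) * M else 0) else 0)"
    by (intro sum.cong) auto
  also have "\<dots> = (if t - p \<le> q \<and> p \<le> t \<and> P then (t choose p) * (p choose (q - (t - p))) * M else 0)"
    by (simp add: sum.delta)
  also have "\<dots> = (if P then N p q t * M else 0)"
    by (auto simp: Nclosed binomial_eq_0 add.commute)
  finally show ?thesis .
qed

theorem proposition2p3:
  fixes W1 W2 W :: "nat list"
  assumes "W1 \<in> Ucirc" and "W2 \<in> Ucirc" and "W \<in> Ucirc"
  shows "(W1 = [] \<longrightarrow> mcoef W1 W2 W = of_bool (W = W2))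
    \<and> (W2 = [] \<longrightarrow> mcoef W1 W2 W = of_bool (W = W1))
    \<and> (W = [] \<longrightarrow> mcoef W1 W2 W = of_bool (W1 = [] \<and> W2 = []))
    \<and> (\<forall>W1' j1 n1 W2' j2 n2 W' j3 n3.
         W1' \<in> Ucirc \<longrightarrow> W2' \<in> Ucirc \<longrightarrow> W' \<in> Ucirc \<longrightarrow>
         (j1::nat) > 0 \<longrightarrow> (j2::nat) > 0 \<longrightarrow> (j3::nat) > 0 \<longrightarrow>
         W1 = W1' @ [j1] @ replicate n1 0 \<longrightarrow>
         W2 = W2' @ [j2] @ replicate n2 0 \<longrightarrow>
         W = W' @ [j3] @ replicate n3 0 \<longrightarrow>
         mcoef W1 W2 W =
           (\<Sum>(k, j, e) \<in> {(k, j, e). k \<le> j \<and> j \<le> n2 \<and> e \<le> min 1 (n2 - j)}.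
              ((n1 + k) choose n1) * (n1 choose (j - k))
              * mcoef W1' (W2' @ [j2] @ replicate (n2 - j - e) 0) W'
              * of_bool (j1 = j3) * of_bool (n1 + k = n3))
         + (\<Sum>(k, j, e) \<in> {(k, j, e). k \<le> j \<and> j \<le> n1 \<and> e \<le> min 1 (n1 - j)}.
              ((n2 + k) choose n2) * (n2 choose (j - k))
              * mcoef (W1' @ [j1] @ replicate (n1 - j - e) 0) W2' W'
              * of_bool (j2 = j3) * of_bool (n2 + k = n3))
         + (\<Sum>k = 0..n2.
              ((n1 + k) choose n1) * (n1 choose (n2 - k))
              * mcoef W1' W2' W'
              * of_bool (j1 + j2 = j3) * of_bool (n1 + k = n3)))"
proof (intro conjI allI impI)
  show "W1 = [] \<Longrightarrow> mcoef W1 W2 W = of_bool (W = W2)" by (simp add: mcoef_def)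
  show "W2 = [] \<Longrightarrow> mcoef W1 W2 W = of_bool (W = W1)" by (simp add: mcoef_def)
  show "W = [] \<Longrightarrow> mcoef W1 W2 W = of_bool (W1 = [] \<and> W2 = [])" by (simp add: mcoef_def Nil_count)
next
  fix W1' j1 n1 W2' j2 n2 W' j3 n3
  assume p1: "(j1::nat) > 0" and p2: "(j2::nat) > 0" and p3: "(j3::nat) > 0"
    and e1: "W1 = W1' @ [j1] @ replicate n1 0" and e2: "W2 = W2' @ [j2] @ replicate n2 0"
    and e3: "W = W' @ [j3] @ replicate n3 0"
  have "mcoef W1 W2 W = F W1' W2' W' j1 j2 j3 n1 n2 n3"
    using TF[OF p1 p2 p3, of W1' W2' W' n1 n2 n3] unfolding T_def[OF p1 p2 p3] mcoef_def e1 e2 e3 by simp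
  also have "\<dots> = (\<Sum>(k, j, e) \<in> {(k, j, e). k \<le> j \<and> j \<le> n2 \<and> e \<le> min 1 (n2 - j)}.
              ((n1 + k) choose n1) * (n1 choose (j - k))
              * mcoef W1' (W2' @ [j2] @ replicate (n2 - j - e) 0) W'
              * of_bool (j1 = j3) * of_bool (n1 + k = n3))
         + (\<Sum>(k, j, e) \<in> {(k, j, e). k \<le> j \<and> j \<le> n1 \<and> e \<le> min 1 (n1 - j)}.
              ((n2 + k) choose n2) * (n2 choose (j - k))
              * mcoef (W1' @ [j1] @ replicate (n1 - j - e) 0) W2' W'
              * of_bool (j2 = j3) * of_bool (n2 + k = n3))
         + (\<Sum>k = 0..n2.
              ((n1 + k) choose n1) * (n1 choose (n2 - k))
              * mcoef W1' W2' W'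
              * of_bool (j1 + j2 = j3) * of_bool (n1 + k = n3))" (is "_ = ?rhs")
  proof -
    have s1: "(\<Sum>(k, j, e) \<in> {(k, j, e). k \<le> j \<and> j \<le> n2 \<and> e \<le> min 1 (n2 - j)}.
              ((n1 + k) choose n1) * (n1 choose (j - k))
              * mcoef W1' (W2' @ [j2] @ replicate (n2 - j - e) 0) W'
              * of_bool (j1 = j3) * of_bool (n1 + k = n3))
       = (if j1 = j3 then \<Sum>r\<le>n2. N n1 (n2-r) n3 * (mcoef W1' (W2' @ [j2] @ replicate r 0) W'
            + (if r>0 then mcoef W1' (W2' @ [j2] @ replicate (r-1) 0) W' else 0)) else 0)"
      using conv[where h="\<lambda>r. mcoef W1' (W2' @ [j2] @ replicate r 0) W'" and p=n1 and q=n2 and t=n3 and P="j1=j3"]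
      by simp
    have s2: "(\<Sum>(k, j, e) \<in> {(k, j, e). k \<le> j \<and> j \<le> n1 \<and> e \<le> min 1 (n1 - j)}.
              ((n2 + k) choose n2) * (n2 choose (j - k))
              * mcoef (W1' @ [j1] @ replicate (n1 - j - e) 0) W2' W'
              * of_bool (j2 = j3) * of_bool (n2 + k = n3))
       = (if j2 = j3 then \<Sum>r\<le>n1. N (n1-r) n2 n3 * (mcoef (W1' @ [j1] @ replicate r 0) W2' W'
            + (if r>0 then mcoef (W1' @ [j1] @ replicate (r-1) 0) W2' W' else 0)) else 0)"
      using conv[where h="\<lambda>r. mcoef (W1' @ [j1] @ replicate r 0) W2' W'" and p=n2 and q=n1 and t=n3 and P="j2=j3"]
      by (simp add: N_sym[of n2])
    have s3: "(\<Sum>k = 0..n2.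
              ((n1 + k) choose n1) * (n1 choose (n2 - k))
              * mcoef W1' W2' W'
              * of_bool (j1 + j2 = j3) * of_bool (n1 + k = n3))
       = (if j1 + j2 = j3 then N n1 n2 n3 * mcoef W1' W2' W' else 0)"
      by (rule conv3)
    show ?thesis unfolding s1 s2 s3 F_def[OF p1 p2 p3] g1_def[OF p1 p2 p3] g2_def[OF p1 p2 p3] by simp
  qed
  finally show "mcoef W1 W2 W = ?rhs" .
qed

end
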